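(* Let $a,b,c\in\mathbf S^2$ be the corners of a spherical triangle $\Delta(abc)$ whose sides $\overline{bc}$ and $\overline{ca}$ have length less than $\pi$, and let $\alpha,\beta,\gamma$ be the midpoints of the sides $\overline{bc},\overline{ca},\overline{ab}$ respectively. Then $$\operatorname{sign}\langle\alpha,\gamma\rangle_E=\operatorname{sign}\langle\beta,\gamma\rangle_E=\operatorname{sign}\big(\langle b,\gamma\rangle_E+\langle c,\gamma\rangle_E\big)\qquad(\operatorname{sign}\in\{-1,0,1\}),$$ and if $\langle\alpha,\gamma\rangle_E=\langle\beta,\gamma\rangle_E=0$ then also $\langle\alpha,\beta\rangle_E=0$.
   Context: $\mathbf S^2\subset\mathbf R^3$ is the unit sphere with Euclidean inner product $\langle\cdot,\cdot\rangle_E$. A spherical (geodesic) triangle $\Delta(abc)$ consists of three points $a,b,c\in\mathbf S^2$ together with, for each pair of corners, a choice of one of the great-circle arcs joining them (its sides $\overline{bc},\overline{ca},\overline{ab}$), such that at most one side has length $\ge\pi$. The midpoint of a side is the point on that arc at equal arc-length distance from its two endpoints. *)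

theory Defs
  imports "HOL-Analysis.Analysis"
begin

definition on_sphere :: "real^3 \<Rightarrow> bool" where
  "on_sphere x \<longleftrightarrow> norm x = 1"

text \<open>A great-circle arc starting at p, with initial unit tangent direction u
  (orthogonal to p) and arc length L (0 \<le> L \<le> 2 pi), is the curve
  t \<mapsto> cos t p + sin t u for t in [0, L].  great_arc p q u L says that
  this arc joins p to q.\<close>
definition great_arc :: "real^3 \<Rightarrow> real^3 \<Rightarrow> real^3 \<Rightarrow> real \<Rightarrow> bool" where
  "great_arc p q u L \<longleftrightarrow>
     on_sphere p \<and> norm u = 1 \<and> p \<bullet> u = 0 \<and> 0 \<le> L \<and> L \<le> 2 * pi \<and>
     q = cos L *\<^sub>R p + sin L *\<^sub>R u"

definition arc_midpoint :: "real^3 \<Rightarrow> real^3 \<Rightarrow> real \<Rightarrow> real^3" where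
  "arc_midpoint p u L = cos (L / 2) *\<^sub>R p + sin (L / 2) *\<^sub>R u"

end

theory Submission
  imports Defs
begin

lemma arc_sum:
  assumes "great_arc p q u L"
  shows "p + q = (2 * cos (L/2)) *\<^sub>R arc_midpoint p u L"
proof -
  have q: "q = cos (2*(L/2)) *\<^sub>R p + sin (2*(L/2)) *\<^sub>R u" using assms by (simp add: great_arc_def)
  show ?thesis unfolding q arc_midpoint_def cos_double_cos sin_double
    by (simp add: algebra_simps power2_eq_square scaleR_add_right)
qed

lemma arc_inner:
  assumes "great_arc p q u L"
  shows "p \<bullet> arc_midpoint p u L = cos (L/2)" "q \<bullet> arc_midpoint p u L = cos (L/2)"
proof -
  have pp: "p \<bullet> p = 1" using assms by (simp add: great_arc_def on_sphere_def norm_eq_sqrt_inner)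
  have uu: "u \<bullet> u = 1" using assms by (simp add: great_arc_def norm_eq_sqrt_inner)
  have pu: "p \<bullet> u = 0" "u \<bullet> p = 0" using assms by (auto simp add: great_arc_def inner_commute)
  show 1: "p \<bullet> arc_midpoint p u L = cos (L/2)"
    by (simp add: arc_midpoint_def inner_add_right pp pu)
  have q: "q = cos (2*(L/2)) *\<^sub>R p + sin (2*(L/2)) *\<^sub>R u" using assms by (simp add: great_arc_def)
  have q: "q = cos L *\<^sub>R p + sin L *\<^sub>R u" using assms by (simp add: great_arc_def)
  have "q \<bullet> arc_midpoint p u L = cos L * cos (L/2) + sin L * sin (L/2)"
    unfolding q arc_midpoint_def by (simp add: inner_add_left inner_add_right pp pu uu)
  also have "\<dots> = cos (L - L/2)" by (rule cos_diff[symmetric])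
  also have "L - L/2 = L/2" by simp
  finally show "q \<bullet> arc_midpoint p u L = cos (L/2)" .
qed

lemma sgn_div_pos: "(k::real) > 0 \<Longrightarrow> sgn (x / k) = sgn x"
  by (cases "x > 0"; cases "x < 0") (auto simp: sgn_if zero_less_divide_iff divide_less_0_iff)

theorem mainTheorem2:
  fixes a b c u_bc u_ca u_ab :: "real^3" and L_bc L_ca L_ab :: real
  assumes "on_sphere a" and "on_sphere b" and "on_sphere c"
    and "great_arc b c u_bc L_bc" and "great_arc c a u_ca L_ca" and "great_arc a b u_ab L_ab"
    and "L_bc < pi" and "L_ca < pi"
  defines "\<alpha> \<equiv> arc_midpoint b u_bc L_bc"
    and "\<beta> \<equiv> arc_midpoint c u_ca L_ca"
    and "\<gamma> \<equiv> arc_midpoint a u_ab L_ab"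
  shows "sgn (\<alpha> \<bullet> \<gamma>) = sgn (\<beta> \<bullet> \<gamma>)
     \<and> sgn (\<beta> \<bullet> \<gamma>) = sgn (b \<bullet> \<gamma> + c \<bullet> \<gamma>)
     \<and> (\<alpha> \<bullet> \<gamma> = 0 \<and> \<beta> \<bullet> \<gamma> = 0 \<longrightarrow> \<alpha> \<bullet> \<beta> = 0)"
proof -
  define ka where "ka = 2 * cos (L_bc/2)"
  define kb where "kb = 2 * cos (L_ca/2)"
  define kg where "kg = 2 * cos (L_ab/2)"
  have L1: "0 \<le> L_bc" "0 \<le> L_ca" using assms(4,5) by (auto simp: great_arc_def)
  have ka: "ka > 0" unfolding ka_def using L1 assms(7) by (intro mult_pos_pos cos_gt_zero_pi) auto
  have kb: "kb > 0" unfolding kb_def using L1 assms(8) by (intro mult_pos_pos cos_gt_zero_pi) auto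
  have sa: "b + c = ka *\<^sub>R \<alpha>" using arc_sum[OF assms(4)] by (simp add: ka_def \<alpha>_def)
  have sb: "c + a = kb *\<^sub>R \<beta>" using arc_sum[OF assms(5)] by (simp add: kb_def \<beta>_def)
  have sg: "a + b = kg *\<^sub>R \<gamma>" using arc_sum[OF assms(6)] by (simp add: kg_def \<gamma>_def)
  have abg: "a \<bullet> \<gamma> = b \<bullet> \<gamma>" using arc_inner[OF assms(6)] by (simp add: \<gamma>_def)
  have ea: "\<alpha> = (1/ka) *\<^sub>R (b + c)" using sa ka by simp
  have eb: "\<beta> = (1/kb) *\<^sub>R (c + a)" using sb kb by simp
  have ag: "\<alpha> \<bullet> \<gamma> = (b \<bullet> \<gamma> + c \<bullet> \<gamma>) / ka" by (simp add: ea inner_add_left)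
  have bg: "\<beta> \<bullet> \<gamma> = (b \<bullet> \<gamma> + c \<bullet> \<gamma>) / kb" by (simp add: eb inner_add_left abg)
  have "(b + c) \<bullet> (c + a) = (a + b) \<bullet> (b + c)"
    using assms(2,3) by (simp add: inner_add_left inner_add_right inner_commute on_sphere_def norm_eq_sqrt_inner)
  also have "\<dots> = kg * ka * (\<gamma> \<bullet> \<alpha>)" by (simp add: sg sa)
  finally have key: "(b + c) \<bullet> (c + a) = kg * ka * (\<alpha> \<bullet> \<gamma>)" by (simp add: inner_commute)
  have ab: "\<alpha> \<bullet> \<beta> = ((b + c) \<bullet> (c + a)) / (ka * kb)" by (simp add: ea eb)
  show ?thesis
    using ag bg ab key ka kb by (simp add: sgn_div_pos)
qed

end
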